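(* Let $G=(V,E,T,c)$ be a $k$-terminal network and let $S\subset T$ with $S\neq\emptyset,T$. Then there exists a component $C\in CC(E_S)$ that is elementary, i.e. $\delta(C)=E_{C\cap T}$ and $|CC(\delta(C))|=2$.
   Context: A $k$-terminal network $G=(V,E,T,c)$ is a finite connected undirected graph $(V,E)$ with edge weights (capacities) $c:E\to\mathbb{R}_{>0}$ and a set $T\subseteq V$ of $|T|=k$ terminals. For $F\subseteq E$ let $c(F)=\sum_{e\in F}c(e)$; for $W\subseteq V$ let $\delta(W)$ be the set of edges with exactly one endpoint in $W$. For $S\subset T$ with $S\neq\emptyset,T$, write $\bar S=T\setminus S$; a cut $(W,V\setminus W)$ is $S$-separating if $W\cap T\in\{S,\bar S\}$, and $\mathrm{mincut}_G(S)$ is the minimum of $c(\delta(W))$ over all $S$-separating cuts. It is assumed (e.g. by a generic perturbation of the weights) that the minimizing cutset is unique; it is denoted $E_S$ (so $E_S=E_{\bar S}$). For $F\subseteq E$, $CC(F)$ denotes the set of vertex sets of connected components of $(V,E\setminus F)$. *)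

theory Defs
  imports Complex_Main
begin

definition cutset :: "'v set set \<Rightarrow> 'v set \<Rightarrow> 'v set set" where
  "cutset E W = {e \<in> E. card (e \<inter> W) = 1}"

definition cost :: "('v set \<Rightarrow> real) \<Rightarrow> 'v set set \<Rightarrow> real" where
  "cost c F = (\<Sum>e\<in>F. c e)"

definition adj :: "'v set set \<Rightarrow> 'v set set \<Rightarrow> ('v \<times> 'v) set" where
  "adj E F = {(u, v). {u, v} \<in> E - F}"

definition CC :: "'v set \<Rightarrow> 'v set set \<Rightarrow> 'v set set \<Rightarrow> 'v set set" where
  "CC V E F = {{v \<in> V. (u, v) \<in> (adj E F)\<^sup>*} | u. u \<in> V}"

definition graph_connected :: "'v set \<Rightarrow> 'v set set \<Rightarrow> bool" where
  "graph_connected V E \<longleftrightarrow> (\<forall>u\<in>V. \<forall>v\<in>V. (u, v) \<in> (adj E {})\<^sup>*)"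

definition k_terminal_network ::
  "'v set \<Rightarrow> 'v set set \<Rightarrow> 'v set \<Rightarrow> ('v set \<Rightarrow> real) \<Rightarrow> nat \<Rightarrow> bool" where
  "k_terminal_network V E T c k \<longleftrightarrow>
     finite V \<and> (\<forall>e\<in>E. e \<subseteq> V \<and> card e = 2) \<and> graph_connected V E \<and>
     (\<forall>e\<in>E. c e > 0) \<and> T \<subseteq> V \<and> card T = k"

definition separating :: "'v set \<Rightarrow> 'v set \<Rightarrow> 'v set \<Rightarrow> 'v set \<Rightarrow> bool" where
  "separating V T S W \<longleftrightarrow> W \<subseteq> V \<and> (W \<inter> T = S \<or> W \<inter> T = T - S)"

definition is_min_cutset ::
  "'v set \<Rightarrow> 'v set set \<Rightarrow> 'v set \<Rightarrow> ('v set \<Rightarrow> real) \<Rightarrow> 'v set \<Rightarrow> 'v set set \<Rightarrow> bool" where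
  "is_min_cutset V E T c S F \<longleftrightarrow>
     (\<exists>W. separating V T S W \<and> F = cutset E W) \<and>
     (\<forall>W. separating V T S W \<longrightarrow> cost c F \<le> cost c (cutset E W))"

definition proper_terminal_subset :: "'v set \<Rightarrow> 'v set \<Rightarrow> bool" where
  "proper_terminal_subset T S \<longleftrightarrow> S \<subseteq> T \<and> S \<noteq> {} \<and> S \<noteq> T"

definition unique_mincuts ::
  "'v set \<Rightarrow> 'v set set \<Rightarrow> 'v set \<Rightarrow> ('v set \<Rightarrow> real) \<Rightarrow> bool" where
  "unique_mincuts V E T c \<longleftrightarrow>
     (\<forall>S. proper_terminal_subset T S \<longrightarrow> (\<exists>!F. is_min_cutset V E T c S F))"

definition ES ::
  "'v set \<Rightarrow> 'v set set \<Rightarrow> 'v set \<Rightarrow> ('v set \<Rightarrow> real) \<Rightarrow> 'v set \<Rightarrow> 'v set set" where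
  "ES V E T c S = (THE F. is_min_cutset V E T c S F)"

definition elementary ::
  "'v set \<Rightarrow> 'v set set \<Rightarrow> 'v set \<Rightarrow> ('v set \<Rightarrow> real) \<Rightarrow> 'v set \<Rightarrow> bool" where
  "elementary V E T c C \<longleftrightarrow>
     proper_terminal_subset T (C \<inter> T) \<and>
     cutset E C = ES V E T c (C \<inter> T) \<and>
     card (CC V E (cutset E C)) = 2"

end

theory Submission imports Defs begin

definition comp :: "'v set \<Rightarrow> 'v set set \<Rightarrow> 'v set set \<Rightarrow> 'v \<Rightarrow> 'v set" where
  "comp V E F u = {v \<in> V. (u, v) \<in> (adj E F)\<^sup>*}"

lemma CC_comp: "CC V E F = comp V E F ` V"
  by (auto simp: CC_def comp_def)

lemma adj_sym: "(adj E F)\<inverse> = adj E F"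
  unfolding adj_def by (auto simp: insert_commute)

lemma rt_sym: "(u,v) \<in> (adj E F)\<^sup>* \<Longrightarrow> (v,u) \<in> (adj E F)\<^sup>*"
  by (metis adj_sym rtrancl_converseI)

lemma rt_mono: "F' \<subseteq> F \<Longrightarrow> (u,v) \<in> (adj E F)\<^sup>* \<Longrightarrow> (u,v) \<in> (adj E F')\<^sup>*"
proof -
  assume "F' \<subseteq> F" "(u,v) \<in> (adj E F)\<^sup>*"
  moreover have "adj E F \<subseteq> adj E F'" using \<open>F' \<subseteq> F\<close> by (auto simp: adj_def)
  ultimately show ?thesis using rtrancl_mono by blast
qed

lemma closure:
  assumes "(u,v) \<in> (adj E F)\<^sup>*" "u \<in> X" "\<forall>e\<in>E-F. card (e \<inter> X) \<noteq> 1"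
  shows "v \<in> X"
  using assms(1)
proof (induction rule: rtrancl_induct)
  case base thus ?case using assms(2) .
next
  case (step y z)
  hence yz: "{y,z} \<in> E - F" by (simp add: adj_def)
  show ?case
  proof (rule ccontr)
    assume "z \<notin> X"
    hence "{y,z} \<inter> X = {y}" using step by auto
    hence "card ({y,z} \<inter> X) = 1" by simp
    thus False using assms(3) yz by blast
  qed
qed

lemma rt_restrict:
  assumes "(u,v) \<in> (adj E F1)\<^sup>*"
    and "\<forall>y z. (u,y) \<in> (adj E F1)\<^sup>* \<longrightarrow> (u,z) \<in> (adj E F1)\<^sup>* \<longrightarrow> {y,z} \<in> E - F1 \<longrightarrow> {y,z} \<notin> F2"
  shows "(u,v) \<in> (adj E F2)\<^sup>*"
  using assms(1)
proof (induction rule: rtrancl_induct)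
  case base thus ?case by simp
next
  case (step y z)
  hence yz: "{y,z} \<in> E - F1" by (simp add: adj_def)
  have uz: "(u,z) \<in> (adj E F1)\<^sup>*" using step(1,2) by (rule rtrancl_into_rtrancl)
  have "{y,z} \<notin> F2" using assms(2) step(1) uz yz by blast
  hence "(y,z) \<in> adj E F2" using yz by (simp add: adj_def)
  with step(3) show ?case by (rule rtrancl_into_rtrancl)
qed

lemma comp_eq: assumes "v \<in> comp V E F u" shows "comp V E F v = comp V E F u"
proof -
  have uv: "(u,v) \<in> (adj E F)\<^sup>*" using assms by (simp add: comp_def)
  hence vu: "(v,u) \<in> (adj E F)\<^sup>*" by (rule rt_sym)
  show ?thesis unfolding comp_def using rtrancl_trans[OF uv] rtrancl_trans[OF vu] by blast
qed

lemma comp_mono: "F' \<subseteq> F \<Longrightarrow> comp V E F u \<subseteq> comp V E F' u"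
  unfolding comp_def using rt_mono[of F' F] by blast

lemma comp_closed: assumes "u \<in> X" "\<forall>e\<in>E-F. card (e \<inter> X) \<noteq> 1" shows "comp V E F u \<subseteq> X"
proof
  fix v assume "v \<in> comp V E F u"
  hence "(u,v) \<in> (adj E F)\<^sup>*" by (simp add: comp_def)
  thus "v \<in> X" using closure assms by metis
qed

lemma comp_disj: assumes "v \<notin> comp V E F u" "v \<in> V" shows "comp V E F v \<inter> comp V E F u = {}"
proof (rule ccontr)
  assume "comp V E F v \<inter> comp V E F u \<noteq> {}"
  then obtain z where "(v,z) \<in> (adj E F)\<^sup>*" "(u,z) \<in> (adj E F)\<^sup>*" by (auto simp: comp_def)
  hence "(u,v) \<in> (adj E F)\<^sup>*" using rt_sym rtrancl_trans by metis
  thus False using assms by (simp add: comp_def)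
qed

lemma comp_self: "u \<in> V \<Longrightarrow> u \<in> comp V E F u"
  unfolding comp_def by simp

lemma comp_step: "a \<in> comp V E F u \<Longrightarrow> (a,b) \<in> adj E F \<Longrightarrow> b \<in> V \<Longrightarrow> b \<in> comp V E F u"
  unfolding comp_def by (auto intro: rtrancl_into_rtrancl)

lemma comp_sub: "comp V E F u \<subseteq> V" unfolding comp_def by auto

lemma card_xor: "x \<noteq> y \<Longrightarrow> card ({x,y} \<inter> X) = 1 \<longleftrightarrow> (x \<in> X) \<noteq> (y \<in> X)"
  by (cases "x \<in> X"; cases "y \<in> X") auto

context
  fixes V :: "'v set" and E :: "'v set set"
  assumes edges: "\<forall>e\<in>E. e \<subseteq> V \<and> card e = 2"
begin

lemma cut_char: "e \<in> E \<Longrightarrow> card (e \<inter> X) = 1 \<longleftrightarrow> (\<exists>a b. e = {a,b} \<and> a \<noteq> b \<and> a \<in> X \<and> b \<notin> X)"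
proof -
  assume e: "e \<in> E"
  then obtain x y where xy: "e = {x,y}" "x \<noteq> y" using edges card_2_iff by metis
  show ?thesis
  proof (cases "x \<in> X"; cases "y \<in> X")
  qed (auto simp: xy doubleton_eq_iff insert_commute)
qed

lemma cutset_compl: "cutset E (V - X) = cutset E X"
  unfolding cutset_def
proof (intro Collect_cong conj_cong refl)
  fix e assume e: "e \<in> E"
  then obtain x y where xy: "e = {x,y}" "x \<noteq> y" "x \<in> V" "y \<in> V" using edges card_2_iff
    by (metis insert_subset)
  show "card (e \<inter> (V - X)) = 1 \<longleftrightarrow> card (e \<inter> X) = 1"
    using xy card_xor[of x y] by auto
qed

lemma conn_cut: "graph_connected V E \<Longrightarrow> a \<in> X \<Longrightarrow> a \<in> V \<Longrightarrow> b \<in> V \<Longrightarrow> b \<notin> X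
   \<Longrightarrow> \<exists>e\<in>E. card (e \<inter> X) = 1"
  unfolding graph_connected_def using closure[of a b E "{}" X] by auto

lemma comp_cut_sub: "cutset E (comp V E F u) \<subseteq> F"
proof
  fix e assume "e \<in> cutset E (comp V E F u)"
  hence e: "e \<in> E" "card (e \<inter> comp V E F u) = 1" by (auto simp: cutset_def)
  then obtain a b where ab: "e = {a,b}" "a \<in> comp V E F u" "b \<notin> comp V E F u"
    using cut_char by blast
  show "e \<in> F"
  proof (rule ccontr)
    assume "e \<notin> F"
    hence "(a,b) \<in> adj E F" using e ab by (simp add: adj_def)
    moreover have "b \<in> V" using edges e ab by auto
    ultimately show False using ab(2,3) comp_step[of a V E F u b] by blast
  qed
qed

end

lemma cost_sum: "finite E \<Longrightarrow> cost c (cutset E Y) = (\<Sum>e\<in>E. if card (e \<inter> Y) = 1 then c e else 0)"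
  by (simp add: cost_def cutset_def sum.inter_filter)

lemma finE: "finite V \<Longrightarrow> \<forall>e\<in>E. e \<subseteq> V \<and> card e = 2 \<Longrightarrow> finite E"
  by (meson Pow_iff finite_Pow_iff finite_subset subsetI)

lemma min_comp:
  assumes edges: "\<forall>e\<in>E. e \<subseteq> V \<and> card e = 2" and fin: "finite V"
    and pos: "\<forall>e\<in>E. c e > 0"
    and sepW: "separating V T S W"
    and minW: "\<forall>Y. separating V T S Y \<longrightarrow> cost c (cutset E W) \<le> cost c (cutset E Y)"
    and x: "x \<in> V" and Csub: "comp V E (cutset E W) x \<subseteq> W"
    and X: "X \<subseteq> V" "X \<inter> T = comp V E (cutset E W) x \<inter> T"
  shows "cost c (cutset E (comp V E (cutset E W) x)) \<le> cost c (cutset E X)"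
proof -
  define C where "C = comp V E (cutset E W) x"
  define D where "D = W - C"
  have noedge: "\<not> (a \<in> C \<and> b \<in> D)" if "{a,b} \<in> E" for a b
  proof
    assume ab: "a \<in> C \<and> b \<in> D"
    have "{a,b} \<inter> W = {a,b}" "a \<noteq> b" using ab Csub unfolding C_def D_def by auto
    hence "card ({a,b} \<inter> W) \<noteq> 1" by simp
    hence "{a,b} \<in> E - cutset E W" using that by (simp add: cutset_def)
    hence "(a,b) \<in> adj E (cutset E W)" by (simp add: adj_def)
    moreover have "b \<in> V" using that edges by auto
    ultimately have "b \<in> C" using ab unfolding C_def using comp_step by metis
    thus False using ab D_def by auto
  qed
  have W: "W = C \<union> D" "C \<inter> D = {}" using Csub unfolding C_def D_def by auto
  have "separating V T S (D \<union> X)"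
  proof -
    have "(D \<union> X) \<inter> T = W \<inter> T" using W X C_def by auto
    moreover have "D \<union> X \<subseteq> V" using sepW X D_def by (auto simp: separating_def)
    ultimately show ?thesis using sepW by (simp add: separating_def)
  qed
  hence m: "cost c (cutset E W) \<le> cost c (cutset E (D \<union> X))" using minW by blast
  have fE: "finite E" using finE fin edges by blast
  let ?i = "\<lambda>Y e. if card (e \<inter> Y) = 1 then c e else 0"
  have pe: "?i (D \<union> X) e + ?i C e \<le> ?i X e + ?i W e" if e: "e \<in> E" for e
  proof -
    obtain a b where ab: "e = {a,b}" "a \<noteq> b" using e edges card_2_iff by metis
    have n1: "\<not> (a \<in> C \<and> b \<in> D)" "\<not> (b \<in> C \<and> a \<in> D)"
      using noedge e ab by (auto simp: insert_commute)
    have cp: "c e > 0" using pos e by auto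
    show ?thesis unfolding ab card_xor[OF ab(2)] using n1 cp W unfolding ab
      by (cases "a \<in> C"; cases "b \<in> C"; cases "a \<in> D"; cases "b \<in> D"; cases "a \<in> X"; cases "b \<in> X") auto
  qed
  have "cost c (cutset E (D \<union> X)) + cost c (cutset E C) \<le> cost c (cutset E X) + cost c (cutset E W)"
    unfolding cost_sum[OF fE] sum.distrib[symmetric] by (rule sum_mono) (rule pe)
  thus ?thesis using m unfolding C_def by linarith
qed


lemma elem_of_comp:
  assumes edges: "\<forall>e\<in>E. e \<subseteq> V \<and> card e = 2" and fin: "finite V"
    and pos: "\<forall>e\<in>E. c e > 0" and conn: "graph_connected V E" and TV: "T \<subseteq> V"
    and uniq: "unique_mincuts V E T c" and PS: "proper_terminal_subset T S"
    and sepW: "separating V T S W"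
    and minW: "\<forall>Y. separating V T S Y \<longrightarrow> cost c (cutset E W) \<le> cost c (cutset E Y)"
    and x: "x \<in> V"
    and leaf: "\<forall>y \<in> V - comp V E (cutset E W) x. comp V E (cutset E (comp V E (cutset E W) x)) y
                  = V - comp V E (cutset E W) x"
  shows "elementary V E T c (comp V E (cutset E W) x)"
proof -
  define F where "F = cutset E W"
  define C where "C = comp V E F x"
  define W0 where "W0 = (if x \<in> W then W else V - W)"
  have fE: "finite E" using finE fin edges by blast
  have sep0: "separating V T S W0"
  proof (cases "x \<in> W")
    case True thus ?thesis using sepW W0_def by simp
  next
    case False
    have "(V - W) \<inter> T = T - W \<inter> T" using TV by auto
    moreover have "T - (T - S) = S" using PS by (auto simp: proper_terminal_subset_def)
    ultimately show ?thesis using sepW False W0_def by (auto simp: separating_def)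
  qed
  have F0: "cutset E W0 = F" using cutset_compl[OF edges] F_def W0_def by auto
  have min0: "\<forall>Y. separating V T S Y \<longrightarrow> cost c (cutset E W0) \<le> cost c (cutset E Y)"
    using minW F0 F_def by simp
  have xW0: "x \<in> W0" using x W0_def by auto
  have CW0: "C \<subseteq> W0" unfolding C_def
    by (rule comp_closed[OF xW0]) (auto simp: F0[symmetric] cutset_def)
  have mc: "cost c (cutset E C) \<le> cost c (cutset E X)" if "X \<subseteq> V" "X \<inter> T = C \<inter> T" for X
    using min_comp[OF edges fin pos sep0 min0 x, of X] CW0 that unfolding C_def F0 by blast
  have W0T: "W0 \<inter> T \<noteq> T" "W0 \<inter> T \<noteq> {}" using sep0 PS
    by (auto simp: separating_def proper_terminal_subset_def)
  then obtain t where t: "t \<in> T" "t \<notin> W0" by blast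
  have tC: "t \<in> V" "t \<notin> C" using t TV CW0 by auto
  have xC: "x \<in> C" using x C_def comp_self by metis
  have CV: "C \<subseteq> V" using C_def comp_sub by metis
  obtain e where e: "e \<in> E" "card (e \<inter> C) = 1" using conn_cut[OF edges conn xC x tC] by blast
  have cpos: "cost c (cutset E C) > 0" unfolding cost_def
    by (intro sum_pos) (use fE e pos in \<open>auto simp: cutset_def\<close>)
  have CTne: "C \<inter> T \<noteq> {}"
  proof
    assume "C \<inter> T = {}"
    hence "cost c (cutset E C) \<le> cost c (cutset E {})" using mc by auto
    moreover have "cutset E {} = {}" by (simp add: cutset_def)
    ultimately show False using cpos by (simp add: cost_def)
  qed
  have PT: "proper_terminal_subset T (C \<inter> T)"
    using CTne CW0 W0T unfolding proper_terminal_subset_def by blast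
  have ismin: "is_min_cutset V E T c (C \<inter> T) (cutset E C)"
    unfolding is_min_cutset_def
  proof (intro conjI allI impI)
    show "\<exists>W. separating V T (C \<inter> T) W \<and> cutset E C = cutset E W"
      using CV by (auto simp: separating_def)
  next
    fix Y assume Y: "separating V T (C \<inter> T) Y"
    show "cost c (cutset E C) \<le> cost c (cutset E Y)"
    proof (cases "Y \<inter> T = C \<inter> T")
      case True thus ?thesis using mc Y by (auto simp: separating_def)
    next
      case False
      hence "Y \<inter> T = T - C \<inter> T" using Y by (auto simp: separating_def)
      hence "(V - Y) \<inter> T = C \<inter> T" using TV by auto
      hence "cost c (cutset E C) \<le> cost c (cutset E (V - Y))" using mc by auto
      thus ?thesis using cutset_compl[OF edges] by simp
    qed
  qed
  have ES: "ES V E T c (C \<inter> T) = cutset E C"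
    unfolding ES_def using uniq PT ismin unfolding unique_mincuts_def by (metis the1_equality)
  have compC: "comp V E (cutset E C) y = C" if "y \<in> C" for y
  proof
    show "comp V E (cutset E C) y \<subseteq> C"
      by (rule comp_closed[OF that]) (auto simp: cutset_def)
    have "comp V E F y = C" using comp_eq that C_def by metis
    moreover have "comp V E F y \<subseteq> comp V E (cutset E C) y"
      by (rule comp_mono) (simp add: C_def comp_cut_sub[OF edges])
    ultimately show "C \<subseteq> comp V E (cutset E C) y" by simp
  qed
  have leaf': "\<forall>y \<in> V - C. comp V E (cutset E C) y = V - C" using leaf C_def F_def by simp
  have "CC V E (cutset E C) = {C, V - C}"
  proof
    show "CC V E (cutset E C) \<subseteq> {C, V - C}" unfolding CC_comp using compC leaf' by auto
    show "{C, V - C} \<subseteq> CC V E (cutset E C)" unfolding CC_comp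
      using compC[OF xC] leaf' tC x by (metis DiffI empty_subsetI image_eqI insert_subset)
  qed
  moreover have "C \<noteq> V - C" using xC by auto
  ultimately have "card (CC V E (cutset E C)) = 2" by simp
  thus ?thesis using PT ES unfolding elementary_def C_def F_def by simp
qed


lemma compl_closed:
  assumes edges: "\<forall>e\<in>E. e \<subseteq> V \<and> card e = 2" and u: "u \<in> V - C"
  shows "comp V E (cutset E C) u \<subseteq> V - C"
proof (rule comp_closed[OF u], intro ballI)
  fix e assume e: "e \<in> E - cutset E C"
  have "e \<notin> cutset E (V - C)" using e cutset_compl[OF edges, of C] by simp
  thus "card (e \<inter> (V - C)) \<noteq> 1" using e by (simp add: cutset_def)
qed

lemma cross_edge:
  assumes edges: "\<forall>e\<in>E. e \<subseteq> V \<and> card e = 2" and conn: "graph_connected V E"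
    and w: "w \<in> V - C" and u: "u \<in> V" "u \<notin> comp V E (cutset E C) w"
  shows "\<exists>a b. {a,b} \<in> E \<and> a \<in> comp V E (cutset E C) w \<and> b \<in> C
     \<and> {a,b} \<in> cutset E C"
proof -
  define K where "K = comp V E (cutset E C) w"
  have wV: "w \<in> V" using w by simp
  have wK: "w \<in> K" unfolding K_def by (rule comp_self[OF wV])
  have uK: "u \<notin> K" using u K_def by simp
  obtain e where e: "e \<in> E" "card (e \<inter> K) = 1" using conn_cut[OF edges conn wK wV u(1) uK] by blast
  obtain a b where ab: "e = {a,b}" "a \<noteq> b" "a \<in> K" "b \<notin> K"
    using cut_char[OF edges e(1), of K] e(2) by blast
  have bV: "b \<in> V" using edges e ab by auto
  have eC: "e \<in> cutset E C"
  proof (rule ccontr)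
    assume "e \<notin> cutset E C"
    hence "(a,b) \<in> adj E (cutset E C)" using e ab by (simp add: adj_def)
    hence "b \<in> K" using comp_step[of a V E "cutset E C" w b] ab(3) bV unfolding K_def by blast
    thus False using ab(4) by simp
  qed
  have "K \<subseteq> V - C" unfolding K_def by (rule compl_closed[OF edges w])
  hence aC: "a \<notin> C" using ab(3) by blast
  have "card ({a,b} \<inter> C) = 1" using eC ab(1) by (simp add: cutset_def)
  hence "b \<in> C" using card_xor[OF ab(2), of C] aC by simp
  thus ?thesis using ab eC e unfolding K_def by blast
qed


theorem lemma2p4:
  fixes V :: "'v set" and E :: "'v set set" and T S :: "'v set"
    and c :: "'v set \<Rightarrow> real" and k :: nat
  assumes "k_terminal_network V E T c k"
    and "unique_mincuts V E T c"
    and "proper_terminal_subset T S"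
  shows "\<exists>C\<in>CC V E (ES V E T c S). elementary V E T c C"
proof -
  have fin: "finite V" and edges: "\<forall>e\<in>E. e \<subseteq> V \<and> card e = 2" and conn: "graph_connected V E"
    and pos: "\<forall>e\<in>E. c e > 0" and TV: "T \<subseteq> V"
    using assms(1) by (auto simp: k_terminal_network_def)
  have "is_min_cutset V E T c S (ES V E T c S)"
    using assms(2,3) unfolding unique_mincuts_def ES_def by (metis theI')
  then obtain W where sepW: "separating V T S W" and FW: "ES V E T c S = cutset E W"
    and minW: "\<forall>Y. separating V T S Y \<longrightarrow> cost c (cutset E W) \<le> cost c (cutset E Y)"
    unfolding is_min_cutset_def by metis
  define F where "F = cutset E W"
  have WT: "W \<inter> T \<noteq> T" "W \<inter> T \<noteq> {}" using sepW assms(3)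
    by (auto simp: separating_def proper_terminal_subset_def)
  then obtain t1 t2 where t: "t1 \<in> W" "t1 \<in> V" "t2 \<notin> W" "t2 \<in> V" using TV by blast
  have C0: "comp V E F t1 \<subseteq> W"
    by (rule comp_closed[OF t(1)]) (auto simp: F_def cutset_def)
  define P where "P = (\<lambda>p. fst p \<in> comp V E F ` V \<and> snd p \<in> V - fst p)"
  define f where "f = (\<lambda>p. card (comp V E (cutset E (fst p)) (snd p)))"
  have P0: "P (comp V E F t1, t2)" using C0 t unfolding P_def by auto
  have bnd: "\<forall>y. P y \<longrightarrow> f y < Suc (card V)"
    unfolding f_def using card_mono[OF fin comp_sub] by (simp add: le_imp_less_Suc)
  obtain p where Pp: "P p" and pmax: "\<forall>y. P y \<longrightarrow> f y \<le> f p"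
    using ex_has_greatest_nat[of P _ f, OF P0 bnd] by blast
  obtain C u where p: "p = (C, u)" by (cases p)
  obtain x0 where x0: "x0 \<in> V" "C = comp V E F x0" using Pp p P_def by auto
  have u: "u \<in> V - C" using Pp p P_def by auto
  define K where "K = comp V E (cutset E C) u"
  have KC: "K \<subseteq> V - C" using compl_closed[OF edges u] K_def by simp
  have KV: "K = V - C"
  proof (rule ccontr)
    assume "K \<noteq> V - C"
    then obtain w where w: "w \<in> V - C" "w \<notin> K" using KC by blast
    define K' where "K' = comp V E (cutset E C) w"
    have disj: "K' \<inter> K = {}" unfolding K_def K'_def by (rule comp_disj) (use w K_def in auto)
    have uK: "u \<in> K" unfolding K_def by (rule comp_self) (use u in simp)
    have uK': "u \<notin> K'" using uK disj by blast
    obtain a b where ab: "{a,b} \<in> E" "a \<in> K'" "b \<in> C" "{a,b} \<in> cutset E C"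
      using cross_edge[OF edges conn w(1), of u] u uK' K'_def by blast
    have aV: "a \<in> V" using ab edges by auto
    define C' where "C' = comp V E F a"
    have C'K': "C' \<subseteq> K'"
    proof -
      have "C' \<subseteq> comp V E (cutset E C) a"
        unfolding C'_def by (rule comp_mono) (simp add: x0 comp_cut_sub[OF edges])
      moreover have "comp V E (cutset E C) a = K'" using comp_eq ab K'_def by metis
      ultimately show ?thesis by simp
    qed
    have wK: "w \<notin> K" using w by simp
    have "u \<in> V - C" using u .
    obtain p' q where pq: "{p',q} \<in> E" "p' \<in> K" "q \<in> C" "{p',q} \<in> cutset E C"
      using cross_edge[OF edges conn u, of w] w K_def by blast
    have CK'd: "C \<inter> C' = {}" using C'K' compl_closed[OF edges w(1)] K'_def by blast
    have big: "K \<union> C \<subseteq> comp V E (cutset E C') u"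
    proof
      fix v assume v: "v \<in> K \<union> C"
      have restr: "(u,v') \<in> (adj E (cutset E C'))\<^sup>*" if "v' \<in> K" for v'
      proof (rule rt_restrict)
        show "(u,v') \<in> (adj E (cutset E C))\<^sup>*" using that unfolding K_def comp_def by simp
        show "\<forall>y z. (u,y) \<in> (adj E (cutset E C))\<^sup>* \<longrightarrow> (u,z) \<in> (adj E (cutset E C))\<^sup>* \<longrightarrow>
            {y,z} \<in> E - cutset E C \<longrightarrow> {y,z} \<notin> cutset E C'"
        proof (intro allI impI)
          fix y z assume yz: "(u,y) \<in> (adj E (cutset E C))\<^sup>*" "(u,z) \<in> (adj E (cutset E C))\<^sup>*"
            "{y,z} \<in> E - cutset E C"
          have "{y,z} \<subseteq> V" using yz(3) edges by blast
          hence "y \<in> V" "z \<in> V" by auto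
          hence "y \<in> K" "z \<in> K" using yz unfolding K_def comp_def by auto
          hence "y \<notin> C'" "z \<notin> C'" using disj C'K' by auto
          hence "{y,z} \<inter> C' = {}" by auto
          thus "{y,z} \<notin> cutset E C'" by (simp add: cutset_def)
        qed
      qed
      show "v \<in> comp V E (cutset E C') u"
      proof (cases "v \<in> K")
        case True
        have vV: "v \<in> V" using True KC by blast
        have "(u,v) \<in> (adj E (cutset E C'))\<^sup>*" by (rule restr[OF True])
        thus ?thesis using vV unfolding comp_def by blast
      next
        case False
        hence vC: "v \<in> C" using v by blast
        have p'C': "p' \<notin> C'" using pq(2) disj C'K' by blast
        have qC': "q \<notin> C'" using pq(3) CK'd by blast
        have "{p',q} \<inter> C' = {}" using p'C' qC' by blast
        hence "{p',q} \<notin> cutset E C'" unfolding cutset_def by simp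
        hence adj1: "(p',q) \<in> adj E (cutset E C')" using pq(1) unfolding adj_def by blast
        have qx: "q \<in> comp V E F x0" using pq(3) x0(2) by blast
        have vx: "v \<in> comp V E F x0" using vC x0(2) by blast
        have "comp V E F q = comp V E F x0" using qx by (rule comp_eq)
        hence "v \<in> comp V E F q" using vx by simp
        hence qvF: "(q,v) \<in> (adj E F)\<^sup>*" unfolding comp_def by blast
        have sub: "cutset E C' \<subseteq> F" unfolding C'_def by (rule comp_cut_sub[OF edges])
        have qv: "(q,v) \<in> (adj E (cutset E C'))\<^sup>*" using rt_mono[OF sub qvF] .
        have "(u,p') \<in> (adj E (cutset E C'))\<^sup>*" using restr[OF pq(2)] .
        hence "(u,q) \<in> (adj E (cutset E C'))\<^sup>*" using adj1 by (rule rtrancl_into_rtrancl)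
        hence uv: "(u,v) \<in> (adj E (cutset E C'))\<^sup>*" using qv by (rule rtrancl_trans)
        have "v \<in> V" using vx comp_sub[of V E F x0] by blast
        thus ?thesis using uv unfolding comp_def by simp
      qed
    qed
    have "u \<notin> C'" using uK C'K' disj by blast
    hence PC': "P (C', u)" unfolding P_def using aV C'_def u by auto
    have "card (K \<union> C) \<le> card (comp V E (cutset E C') u)"
      by (rule card_mono[OF finite_subset[OF comp_sub fin] big])
    moreover have "card (K \<union> C) = card K + card C"
      using KC fin by (intro card_Un_disjoint) (auto intro: finite_subset[OF comp_sub] simp: K_def x0)
    moreover have "card C > 0"
    proof -
      have "x0 \<in> C" unfolding x0(2) by (rule comp_self[OF x0(1)])
      moreover have "finite C" unfolding x0(2) by (rule finite_subset[OF comp_sub fin])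
      ultimately show ?thesis using card_gt_0_iff by blast
    qed
    moreover have "f (C', u) \<le> f p" using pmax PC' by blast
    ultimately show False unfolding f_def p K_def by simp
  qed
  have leaf: "\<forall>y \<in> V - comp V E (cutset E W) x0. comp V E (cutset E (comp V E (cutset E W) x0)) y
                  = V - comp V E (cutset E W) x0"
  proof -
    have CW: "comp V E (cutset E W) x0 = C" using x0(2) F_def by simp
    have "comp V E (cutset E C) y = V - C" if y: "y \<in> V - C" for y
    proof -
      have "y \<in> comp V E (cutset E C) u" using y KV K_def by simp
      hence "comp V E (cutset E C) y = comp V E (cutset E C) u" by (rule comp_eq)
      thus ?thesis using KV K_def by simp
    qed
    thus ?thesis unfolding CW by blast
  qed
  have "elementary V E T c (comp V E (cutset E W) x0)"
    by (rule elem_of_comp[OF edges fin pos conn TV assms(2,3) sepW minW x0(1) leaf])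
  moreover have "comp V E (cutset E W) x0 \<in> CC V E (ES V E T c S)"
    unfolding CC_comp FW using x0 by blast
  ultimately show ?thesis by blast
qed

end
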